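(* Let $n$ and $r$ be positive integers with $\frac{14}{5}r-1\le n\le 3r-2$. Then $\rho_2(K(n,r))=3$.
   Context: For integers $n\ge 2r$, the Kneser graph $K(n,r)$ has as vertices the $r$-element subsets of $[n]=\{1,\dots,n\}$, two vertices being adjacent iff they are disjoint. A $2$-packing of a graph $G$ is a set of vertices pairwise at distance at least $3$ in $G$; $\rho_2(G)$ is the maximum cardinality of a $2$-packing. *)

theory Defs
  imports Complex_Main
begin

definition kneser_verts :: "nat \<Rightarrow> nat \<Rightarrow> nat set set" where
  "kneser_verts n r = {A. A \<subseteq> {1..n} \<and> card A = r}"

definition kneser_adj :: "nat \<Rightarrow> nat \<Rightarrow> nat set \<Rightarrow> nat set \<Rightarrow> bool" where
  "kneser_adj n r A B \<longleftrightarrow> A \<in> kneser_verts n r \<and> B \<in> kneser_verts n r \<and> A \<inter> B = {}"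

fun walk_len :: "'a set \<Rightarrow> ('a \<Rightarrow> 'a \<Rightarrow> bool) \<Rightarrow> 'a \<Rightarrow> 'a \<Rightarrow> nat \<Rightarrow> bool" where
  "walk_len V E x y 0 \<longleftrightarrow> x \<in> V \<and> x = y"
| "walk_len V E x y (Suc k) \<longleftrightarrow> x \<in> V \<and> (\<exists>z\<in>V. E x z \<and> walk_len V E z y k)"

definition dist_ge :: "'a set \<Rightarrow> ('a \<Rightarrow> 'a \<Rightarrow> bool) \<Rightarrow> nat \<Rightarrow> 'a \<Rightarrow> 'a \<Rightarrow> bool" where
  "dist_ge V E d x y \<longleftrightarrow> (\<forall>k<d. \<not> walk_len V E x y k)"

definition two_packing :: "'a set \<Rightarrow> ('a \<Rightarrow> 'a \<Rightarrow> bool) \<Rightarrow> 'a set \<Rightarrow> bool" where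
  "two_packing V E P \<longleftrightarrow> P \<subseteq> V \<and> (\<forall>x\<in>P. \<forall>y\<in>P. x \<noteq> y \<longrightarrow> dist_ge V E 3 x y)"

definition rho2 :: "'a set \<Rightarrow> ('a \<Rightarrow> 'a \<Rightarrow> bool) \<Rightarrow> nat" where
  "rho2 V E = Max (card ` {P. two_packing V E P})"

end

theory Submission
  imports Defs
begin

lemma walk2: "walk_len V E x y 2 \<longleftrightarrow> x \<in> V \<and> (\<exists>z\<in>V. E x z \<and> z \<in> V \<and> (\<exists>w\<in>V. E z w \<and> w \<in> V \<and> w = y))"
  by (simp add: numeral_eq_Suc)

lemma kv_fin: "A \<in> kneser_verts n r \<Longrightarrow> finite A"
  unfolding kneser_verts_def by (auto intro: finite_subset)

lemma dist_ge_imp: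
  assumes A: "A \<in> kneser_verts n r" and B: "B \<in> kneser_verts n r"
    and d: "dist_ge (kneser_verts n r) (kneser_adj n r) 3 A B"
  shows "n < card (A \<union> B) + r"
proof (rule ccontr)
  assume "\<not> ?thesis"
  hence le: "r \<le> n - card (A \<union> B)" by simp
  have sub: "A \<union> B \<subseteq> {1..n}" using A B unfolding kneser_verts_def by auto
  have "card ({1..n} - (A \<union> B)) = n - card (A \<union> B)"
    using sub card_Diff_subset[OF finite_subset[OF sub], of "{1..n}"] by simp
  then obtain C where C: "C \<subseteq> {1..n} - (A \<union> B)" "card C = r"
    using le obtain_subset_with_card_n by (metis)
  have CV: "C \<in> kneser_verts n r" using C unfolding kneser_verts_def by auto
  have "walk_len (kneser_verts n r) (kneser_adj n r) A B 2"
    using A B CV C unfolding walk2 kneser_adj_def by auto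
  with d show False unfolding dist_ge_def by auto
qed

lemma dist_ge_intro:
  assumes A: "A \<in> kneser_verts n r" and B: "B \<in> kneser_verts n r"
    and ne: "A \<noteq> B" and i: "A \<inter> B \<noteq> {}" and u: "n < card (A \<union> B) + r"
  shows "dist_ge (kneser_verts n r) (kneser_adj n r) 3 A B"
  unfolding dist_ge_def
proof (intro allI impI)
  fix k :: nat assume "k < 3"
  hence "k = 0 \<or> k = 1 \<or> k = 2" by auto
  moreover have "\<not> walk_len (kneser_verts n r) (kneser_adj n r) A B 0" using ne by simp
  moreover have "\<not> walk_len (kneser_verts n r) (kneser_adj n r) A B 1"
    using i by (simp add: kneser_adj_def)
  moreover have "\<not> walk_len (kneser_verts n r) (kneser_adj n r) A B 2"
  proof
    assume "walk_len (kneser_verts n r) (kneser_adj n r) A B 2"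
    then obtain C where CV: "C \<in> kneser_verts n r" and "A \<inter> C = {}" "C \<inter> B = {}"
      unfolding walk2 kneser_adj_def by auto
    hence Csub: "C \<subseteq> {1..n} - (A \<union> B)" using CV unfolding kneser_verts_def by auto
    have sub: "A \<union> B \<subseteq> {1..n}" using A B unfolding kneser_verts_def by auto
    have "card C \<le> card ({1..n} - (A \<union> B))" using Csub by (simp add: card_mono)
    also have "\<dots> = n - card (A \<union> B)"
      using sub card_Diff_subset[OF finite_subset[OF sub], of "{1..n}"] by simp
    moreover have "card (A \<union> B) \<le> n" using sub card_mono[OF _ sub] by simp
    ultimately show False using CV u unfolding kneser_verts_def by simp
  qed
  ultimately show "\<not> walk_len (kneser_verts n r) (kneser_adj n r) A B k" by auto
qed

lemma card_Int_Un3: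
  assumes "finite Y" "finite A" "finite B" "finite C"
  shows "card (Y \<inter> (A \<union> B \<union> C)) \<le> card (Y \<inter> A) + card (Y \<inter> B) + card (Y \<inter> C)"
proof -
  have "Y \<inter> (A \<union> B \<union> C) = (Y \<inter> A) \<union> (Y \<inter> B) \<union> (Y \<inter> C)" by auto
  hence "card (Y \<inter> (A \<union> B \<union> C)) = card ((Y \<inter> A) \<union> (Y \<inter> B) \<union> (Y \<inter> C))" by simp
  moreover have "card ((Y \<inter> A) \<union> (Y \<inter> B) \<union> (Y \<inter> C)) \<le> card ((Y \<inter> A) \<union> (Y \<inter> B)) + card (Y \<inter> C)"
    by (rule card_Un_le)
  moreover have "card ((Y \<inter> A) \<union> (Y \<inter> B)) \<le> card (Y \<inter> A) + card (Y \<inter> B)"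
    by (rule card_Un_le)
  ultimately show ?thesis by linarith
qed

lemma bonf4:
  assumes f: "finite A" "finite B" "finite C" "finite D"
  shows "card A + card B + card C + card D \<le> card (A \<union> B \<union> C \<union> D)
     + card (A \<inter> B) + card (A \<inter> C) + card (B \<inter> C)
     + card (D \<inter> A) + card (D \<inter> B) + card (D \<inter> C)"
proof -
  have e1: "card (A \<union> B) + card (A \<inter> B) = card A + card B" using f card_Un_Int by metis
  have e2: "card (A \<union> B \<union> C) + card ((A \<union> B) \<inter> C) = card (A \<union> B) + card C"
    using f card_Un_Int by (metis finite_UnI)
  have i2: "(A \<union> B) \<inter> C = (A \<inter> C) \<union> (B \<inter> C)" by auto
  have l2: "card ((A \<union> B) \<inter> C) \<le> card (A \<inter> C) + card (B \<inter> C)"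
    unfolding i2 by (rule card_Un_le)
  have e3: "card (A \<union> B \<union> C \<union> D) + card ((A \<union> B \<union> C) \<inter> D) = card (A \<union> B \<union> C) + card D"
    using f card_Un_Int by (metis finite_UnI)
  have "(A \<union> B \<union> C) \<inter> D = D \<inter> (A \<union> B \<union> C)" by auto
  hence l3: "card ((A \<union> B \<union> C) \<inter> D) \<le> card (D \<inter> A) + card (D \<inter> B) + card (D \<inter> C)"
    using card_Int_Un3[OF f(4) f(1) f(2) f(3)] by simp
  show ?thesis using e1 e2 e3 l2 l3 by linarith
qed

lemma pair_bound:
  assumes A: "A \<in> kneser_verts n r" and B: "B \<in> kneser_verts n r"
    and d: "dist_ge (kneser_verts n r) (kneser_adj n r) 3 A B"
  shows "card (A \<inter> B) + n + 1 \<le> 3 * r"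
proof -
  have "n < card (A \<union> B) + r" by (rule dist_ge_imp[OF A B d])
  moreover have "card (A \<union> B) + card (A \<inter> B) = card A + card B"
    using kv_fin[OF A] kv_fin[OF B] card_Un_Int by metis
  moreover have "card A = r" "card B = r" using A B unfolding kneser_verts_def by auto
  ultimately show ?thesis by linarith
qed

lemma four_elems:
  assumes "card Q = 4"
  shows "\<exists>a b c d. Q = {a,b,c,d} \<and> a \<noteq> b \<and> a \<noteq> c \<and> a \<noteq> d \<and> b \<noteq> c \<and> b \<noteq> d \<and> c \<noteq> d"
proof -
  have "card Q = Suc 3" using assms by simp
  then obtain a R where "Q = insert a R" "a \<notin> R" "card R = 3" by (meson card_Suc_eq)
  moreover then obtain b c d where "R = {b,c,d}" "b \<noteq> c" "c \<noteq> d" "b \<noteq> d" by (auto simp: card_3_iff)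
  ultimately show ?thesis by blast
qed

theorem corollary4p9:
  fixes n r :: nat
  assumes "0 < n" and "0 < r"
    and "14 / 5 * real r - 1 \<le> real n"
    and "n \<le> 3 * r - 2"
  shows "rho2 (kneser_verts n r) (kneser_adj n r) = 3"
proof -
  define V where "V = kneser_verts n r"
  define E where "E = kneser_adj n r"
  define S where "S = {P. two_packing V E P}"
  have "real (14*r) \<le> real (5*n+5)" using assms(3) by simp
  hence h14: "14*r \<le> 5*n+5" by linarith
  have finV: "finite V" unfolding V_def kneser_verts_def
    by (rule finite_subset[of _ "Pow {1..n}"]) auto
  have finS: "finite S" unfolding S_def two_packing_def
    by (rule finite_subset[of _ "Pow V"]) (auto simp: finV)
  have ub: "card P \<le> 3" if P: "P \<in> S" for P
  proof (rule ccontr)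
    assume "\<not> card P \<le> 3"
    hence "4 \<le> card P" by simp
    moreover have "finite P" using P finV unfolding S_def two_packing_def by (auto intro: finite_subset)
    ultimately obtain Q where Q: "Q \<subseteq> P" "card Q = 4" by (metis obtain_subset_with_card_n)
    then obtain a b c d where Qe: "Q = {a,b,c,d}" and dis: "a \<noteq> b" "a \<noteq> c" "a \<noteq> d" "b \<noteq> c" "b \<noteq> d" "c \<noteq> d"
      using four_elems[OF Q(2)] by blast
    have PV: "P \<subseteq> V" and pk: "\<forall>x\<in>P. \<forall>y\<in>P. x \<noteq> y \<longrightarrow> dist_ge V E 3 x y"
      using P unfolding S_def two_packing_def by auto
    have mem: "a \<in> V" "b \<in> V" "c \<in> V" "d \<in> V" "a \<in> P" "b \<in> P" "c \<in> P" "d \<in> P"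
      using Q Qe PV by auto
    have pb: "card (x \<inter> y) + n + 1 \<le> 3 * r" if "x \<in> P" "y \<in> P" "x \<noteq> y" for x y
      using pair_bound[of x n r y] that pk PV unfolding V_def E_def by auto
    have fins: "finite a" "finite b" "finite c" "finite d" using mem kv_fin unfolding V_def by auto
    have cards: "card a = r" "card b = r" "card c = r" "card d = r"
      using mem unfolding V_def kneser_verts_def by auto
    have "a \<union> b \<union> c \<union> d \<subseteq> {1..n}" using mem unfolding V_def kneser_verts_def by auto
    hence "card (a \<union> b \<union> c \<union> d) \<le> n" using card_mono[of "{1..n}"] by fastforce
    moreover note bonf4[OF fins]
    moreover note pb[OF mem(5) mem(6) dis(1)] pb[OF mem(5) mem(7) dis(2)] pb[OF mem(6) mem(7) dis(4)]
      pb[OF mem(8) mem(5) dis(3)[symmetric]] pb[OF mem(8) mem(6) dis(5)[symmetric]] pb[OF mem(8) mem(7) dis(6)[symmetric]]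
    ultimately show False using cards h14 by linarith
  qed
  define t where "t = 3*r - n - 1"
  define m where "m = r - t"
  have t1: "1 \<le> t" and tr: "t < r" and nb: "r + 2*m \<le> n" and rm: "t + m = r"
    using assms h14 unfolding t_def m_def by auto
  define A where "A = {1..r}"
  define B where "B = {1..t} \<union> {r+1..r+m}"
  define C where "C = {1..t} \<union> {r+m+1..r+2*m}"
  have cA: "card A = r" unfolding A_def by simp
  have cB: "card B = r" unfolding B_def using rm tr
    by (subst card_Un_disjoint) auto
  have cC: "card C = r" unfolding C_def using rm tr
    by (subst card_Un_disjoint) auto
  have AV: "A \<in> V" unfolding V_def kneser_verts_def A_def using nb by auto
  have BV: "B \<in> V" using cB nb tr unfolding V_def kneser_verts_def B_def by auto
  have CV: "C \<in> V" using cC nb tr unfolding V_def kneser_verts_def C_def by auto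
  have iAB: "A \<inter> B = {1..t}" unfolding A_def B_def using tr by auto
  have iAC: "A \<inter> C = {1..t}" unfolding A_def C_def using tr by auto
  have iBC: "B \<inter> C = {1..t}" unfolding B_def C_def using tr by auto
  have good: "dist_ge V E 3 X Y"
    if X: "X \<in> V" and Y: "Y \<in> V" and I: "X \<inter> Y = {1..t}" for X Y
  proof -
    have cX: "card X = r" "card Y = r" using X Y unfolding V_def kneser_verts_def by auto
    have "card (X \<union> Y) + card (X \<inter> Y) = card X + card Y"
      using kv_fin X Y card_Un_Int unfolding V_def by metis
    hence u: "n < card (X \<union> Y) + r" using I cX t_def h14 assms t1 by auto
    have ne: "X \<noteq> Y" using I cX tr by auto
    have i: "X \<inter> Y \<noteq> {}" using I t1 by auto
    show ?thesis using dist_ge_intro[of X n r Y] X Y ne i u unfolding V_def E_def by auto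
  qed
  have inS: "{A,B,C} \<in> S"
    unfolding S_def two_packing_def
    using AV BV CV good iAB iAC iBC
    by (auto simp: Int_commute)
  have "A \<noteq> B" "A \<noteq> C" "B \<noteq> C" using iAB iAC iBC cA cB tr by auto
  hence "card {A,B,C} = 3" by simp
  hence three: "3 \<in> card ` S" using inS by force
  have "Max (card ` S) = 3"
    by (rule Max_eqI) (use finS ub three in auto)
  thus ?thesis unfolding rho2_def S_def V_def E_def .
qed

end
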